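(* Let $\Sigma=(X,\mathcal{U},\phi)$ be an ordered control system which is monotone (with respect to states and inputs), and let $\mathcal{U}_c\subseteq\mathcal{U}$. Assume: (i) there exists $\rho\in\mathcal{K}_\infty$ such that for all $x_-,x,x_+\in X$ with $x_-\le x\le x_+$ one has $\|x\|_X\le\rho(\|x_-\|_X+\|x_+\|_X)$; (ii) there exist $\eta,\xi\in\mathcal{K}_\infty$ such that for every $x\in X$, every $u\in\mathcal{U}(x)$ and every $\varepsilon>0$ there exist $x_-,x_+\in X$, $u_-\in\mathcal{U}(x_-)\cap\mathcal{U}_c$, $u_+\in\mathcal{U}(x_+)\cap\mathcal{U}_c$ with $x_-\le x\le x_+$, $u_-\le u\le u_+$, $\max(\|u_-\|_{\mathcal{U}},\|u_+\|_{\mathcal{U}})\le\eta(\|u\|_{\mathcal{U}}+\varepsilon)$ and $\max(\|x_-\|_X,\|x_+\|_X)\le\xi(\|x\|_X+\|u\|_{\mathcal{U}}+\varepsilon)$. Then $\Sigma$ is ISS if and only if $\Sigma$ is ISS with respect to inputs in $\mathcal{U}_c$. Moreover, if $\rho$ and $\xi$ are linear, then $\Sigma$ is exp-ISS if and only if $\Sigma$ is exp-ISS with respect to inputs in $\mathcal{U}_c$; and if in addition $\Sigma$ is exp-ISS w.r.t. inputs in $\mathcal{U}_c$ with a linear gain function and $\eta$ is linear, then $\Sigma$ is exp-ISS with a linear gain function.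
   Context: Comparison functions: $\mathcal{K}$ is the set of continuous strictly increasing $\gamma:\mathbb{R}_+\to\mathbb{R}_+$ with $\gamma(0)=0$; $\mathcal{K}_\infty$ the unbounded functions in $\mathcal{K}$; $\mathcal{L}$ the continuous decreasing $\gamma:\mathbb{R}_+\to\mathbb{R}_+$ with $\gamma(t)\to0$; $\mathcal{KL}$ the functions $\beta:\mathbb{R}_+^2\to\mathbb{R}_+$ with $\beta(\cdot,t)\in\mathcal{K}$ for all $t\ge0$ and $\beta(r,\cdot)\in\mathcal{L}$ for all $r>0$. A control system $\Sigma=(X,\mathcal{U},\phi)$ consists of a normed linear space $X$ (state space), a set $U$ of input values (nonempty subset of a normed linear space), a normed linear space $\mathcal{U}$ of functions $\mathbb{R}_+\to U$ closed under time shifts $u\mapsto u(\cdot+\tau)$, nonempty sets $\mathcal{U}(x)\subseteq\mathcal{U}$ of admissible inputs for each $x\in X$, and a map $\phi$ such that for every $x\in X$, $u\in\mathcal{U}(x)$ and $t\ge0$ the state $\phi(t,x,u)\in X$ is defined, $\phi(0,x,u)=x$, $\phi(t,x,u)=\phi(t,x,\tilde u)$ whenever $\tilde u\in\mathcal{U}(x)$ agrees with $u$ on $[0,t]$, and $u(t+\cdot)\in\mathcal{U}(\phi(t,x,u))$ with $\phi(h,\phi(t,x,u),u(t+\cdot))=\phi(t+h,x,u)$ for all $t,h\ge0$. A positive cone in a normed linear space $X$ is a set $K$ with $K\cap(-K)=\{0\}$, $ax\in K$ and $x+y\in K$ for all $a\ge0$, $x,y\in K$; it induces the order $x\le y\iff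 y-x\in K$. The system is ordered if $X$ and $\mathcal{U}$ carry such orders. It is monotone if for all $t\ge0$, all $x_1\le x_2$ in $X$ and all $u_1\in\mathcal{U}(x_1)$, $u_2\in\mathcal{U}(x_2)$ with $u_1\le u_2$ one has $\phi(t,x_1,u_1)\le\phi(t,x_2,u_2)$. For $\mathcal{U}_c\subseteq\mathcal{U}$, $\Sigma$ is ISS with respect to inputs in $\mathcal{U}_c$ if there exist $\beta\in\mathcal{KL}$, $\gamma\in\mathcal{K}$ such that $\|\phi(t,x,u)\|_X\le\beta(\|x\|_X,t)+\gamma(\|u\|_{\mathcal{U}})$ for all $t\ge0$, all $x\in X$ and all $u\in\mathcal{U}(x)\cap\mathcal{U}_c$; ISS means ISS w.r.t. inputs in $\mathcal{U}$. $\Sigma$ is exp-ISS w.r.t. inputs in $\mathcal{U}_c$ if there exist constants $M,a>0$ and $\gamma\in\mathcal{K}_\infty$ with $\|\phi(t,x,u)\|_X\le Me^{-at}\|x\|_X+\gamma(\|u\|_{\mathcal{U}})$ for the same range of $t,x,u$; exp-ISS means exp-ISS w.r.t. inputs in $\mathcal{U}$; "with a linear gain function" means $\gamma$ can be chosen linear. *)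

theory Defs
  imports "HOL-Analysis.Analysis"
begin

definition class_K :: "(real \<Rightarrow> real) \<Rightarrow> bool" where
  "class_K \<gamma> \<longleftrightarrow> continuous_on {0..} \<gamma> \<and> strict_mono_on {0..} \<gamma> \<and> \<gamma> 0 = 0
     \<and> (\<forall>r\<ge>0. \<gamma> r \<ge> 0)"

definition class_Kinf :: "(real \<Rightarrow> real) \<Rightarrow> bool" where
  "class_Kinf \<gamma> \<longleftrightarrow> class_K \<gamma> \<and> (\<forall>M. \<exists>r\<ge>0. \<gamma> r > M)"

definition class_L :: "(real \<Rightarrow> real) \<Rightarrow> bool" where
  "class_L \<gamma> \<longleftrightarrow> continuous_on {0..} \<gamma> \<and> (\<forall>s t. 0 \<le> s \<longrightarrow> s \<le> t \<longrightarrow> \<gamma> t \<le> \<gamma> s)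
     \<and> (\<forall>t\<ge>0. \<gamma> t \<ge> 0) \<and> (\<gamma> \<longlongrightarrow> 0) at_top"

definition class_KL :: "(real \<Rightarrow> real \<Rightarrow> real) \<Rightarrow> bool" where
  "class_KL \<beta> \<longleftrightarrow> (\<forall>t\<ge>0. class_K (\<lambda>r. \<beta> r t)) \<and> (\<forall>r>0. class_L (\<beta> r))"

definition linear_fun :: "(real \<Rightarrow> real) \<Rightarrow> bool" where
  "linear_fun f \<longleftrightarrow> (\<exists>c. \<forall>r\<ge>0. f r = c * r)"

text \<open>Input functions are represented as maps real \<Rightarrow> 'v that vanish on negative times
  (only their restriction to the nonnegative reals carries information).\<close>

definition shift :: "real \<Rightarrow> (real \<Rightarrow> 'v::real_vector) \<Rightarrow> real \<Rightarrow> 'v" where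
  "shift \<tau> u = (\<lambda>s. if 0 \<le> s then u (s + \<tau>) else 0)"

definition input_space ::
  "'v::real_normed_vector set \<Rightarrow> (real \<Rightarrow> 'v) set \<Rightarrow> ((real \<Rightarrow> 'v) \<Rightarrow> real) \<Rightarrow> bool" where
  "input_space Uv Uf nU \<longleftrightarrow>
     Uv \<noteq> {} \<and>
     (\<forall>u\<in>Uf. (\<forall>t\<ge>0. u t \<in> Uv) \<and> (\<forall>t<0. u t = 0)) \<and>
     (\<lambda>t. 0) \<in> Uf \<and>
     (\<forall>u\<in>Uf. \<forall>w\<in>Uf. (\<lambda>t. u t + w t) \<in> Uf) \<and>
     (\<forall>u\<in>Uf. \<forall>c. (\<lambda>t. c *\<^sub>R u t) \<in> Uf) \<and>
     (\<forall>u\<in>Uf. nU u \<ge> 0) \<and>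
     (\<forall>u\<in>Uf. nU u = 0 \<longleftrightarrow> u = (\<lambda>t. 0)) \<and>
     (\<forall>u\<in>Uf. \<forall>c. nU (\<lambda>t. c *\<^sub>R u t) = \<bar>c\<bar> * nU u) \<and>
     (\<forall>u\<in>Uf. \<forall>w\<in>Uf. nU (\<lambda>t. u t + w t) \<le> nU u + nU w) \<and>
     (\<forall>u\<in>Uf. \<forall>\<tau>\<ge>0. shift \<tau> u \<in> Uf)"

definition control_system ::
  "'v::real_normed_vector set \<Rightarrow> (real \<Rightarrow> 'v) set \<Rightarrow> ((real \<Rightarrow> 'v) \<Rightarrow> real)
   \<Rightarrow> ('x::real_normed_vector \<Rightarrow> (real \<Rightarrow> 'v) set)
   \<Rightarrow> (real \<Rightarrow> 'x \<Rightarrow> (real \<Rightarrow> 'v) \<Rightarrow> 'x) \<Rightarrow> bool" where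
  "control_system Uv Uf nU Uadm \<phi> \<longleftrightarrow>
     input_space Uv Uf nU \<and>
     (\<forall>x. Uadm x \<noteq> {} \<and> Uadm x \<subseteq> Uf) \<and>
     (\<forall>x. \<forall>u\<in>Uadm x. \<phi> 0 x u = x) \<and>
     (\<forall>x. \<forall>u\<in>Uadm x. \<forall>u'\<in>Uadm x. \<forall>t\<ge>0.
        (\<forall>s\<in>{0..t}. u s = u' s) \<longrightarrow> \<phi> t x u = \<phi> t x u') \<and>
     (\<forall>x. \<forall>u\<in>Uadm x. \<forall>t\<ge>0. shift t u \<in> Uadm (\<phi> t x u) \<and>
        (\<forall>h\<ge>0. \<phi> h (\<phi> t x u) (shift t u) = \<phi> (t + h) x u))"

definition positive_cone :: "'x::real_vector set \<Rightarrow> bool" where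
  "positive_cone K \<longleftrightarrow> K \<inter> uminus ` K = {0} \<and>
     (\<forall>a\<ge>0. \<forall>x\<in>K. a *\<^sub>R x \<in> K) \<and> (\<forall>x\<in>K. \<forall>y\<in>K. x + y \<in> K)"

definition positive_fun_cone :: "(real \<Rightarrow> 'v::real_vector) set \<Rightarrow> (real \<Rightarrow> 'v) set \<Rightarrow> bool" where
  "positive_fun_cone Uf K \<longleftrightarrow> K \<subseteq> Uf \<and>
     K \<inter> (\<lambda>u t. - u t) ` K = {\<lambda>t. 0} \<and>
     (\<forall>a\<ge>0. \<forall>u\<in>K. (\<lambda>t. a *\<^sub>R u t) \<in> K) \<and> (\<forall>u\<in>K. \<forall>w\<in>K. (\<lambda>t. u t + w t) \<in> K)"

definition cle :: "'x::real_vector set \<Rightarrow> 'x \<Rightarrow> 'x \<Rightarrow> bool" where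
  "cle K x y \<longleftrightarrow> y - x \<in> K"

definition fle :: "(real \<Rightarrow> 'v::real_vector) set \<Rightarrow> (real \<Rightarrow> 'v) \<Rightarrow> (real \<Rightarrow> 'v) \<Rightarrow> bool" where
  "fle K u w \<longleftrightarrow> (\<lambda>t. w t - u t) \<in> K"

definition monotone_system ::
  "'x::real_normed_vector set \<Rightarrow> (real \<Rightarrow> 'v::real_normed_vector) set
   \<Rightarrow> ('x \<Rightarrow> (real \<Rightarrow> 'v) set) \<Rightarrow> (real \<Rightarrow> 'x \<Rightarrow> (real \<Rightarrow> 'v) \<Rightarrow> 'x) \<Rightarrow> bool" where
  "monotone_system KX KU Uadm \<phi> \<longleftrightarrow>
     (\<forall>t\<ge>0. \<forall>x1 x2. \<forall>u1\<in>Uadm x1. \<forall>u2\<in>Uadm x2.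
        cle KX x1 x2 \<longrightarrow> fle KU u1 u2 \<longrightarrow> cle KX (\<phi> t x1 u1) (\<phi> t x2 u2))"

definition ISS_wrt ::
  "((real \<Rightarrow> 'v) \<Rightarrow> real) \<Rightarrow> ('x::real_normed_vector \<Rightarrow> (real \<Rightarrow> 'v) set)
   \<Rightarrow> (real \<Rightarrow> 'x \<Rightarrow> (real \<Rightarrow> 'v) \<Rightarrow> 'x) \<Rightarrow> (real \<Rightarrow> 'v) set \<Rightarrow> bool" where
  "ISS_wrt nU Uadm \<phi> Uc \<longleftrightarrow> (\<exists>\<beta> \<gamma>. class_KL \<beta> \<and> class_K \<gamma> \<and>
     (\<forall>t\<ge>0. \<forall>x. \<forall>u\<in>Uadm x \<inter> Uc. norm (\<phi> t x u) \<le> \<beta> (norm x) t + \<gamma> (nU u)))"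

definition expISS_wrt ::
  "((real \<Rightarrow> 'v) \<Rightarrow> real) \<Rightarrow> ('x::real_normed_vector \<Rightarrow> (real \<Rightarrow> 'v) set)
   \<Rightarrow> (real \<Rightarrow> 'x \<Rightarrow> (real \<Rightarrow> 'v) \<Rightarrow> 'x) \<Rightarrow> (real \<Rightarrow> 'v) set \<Rightarrow> bool" where
  "expISS_wrt nU Uadm \<phi> Uc \<longleftrightarrow> (\<exists>M a \<gamma>. M > 0 \<and> a > 0 \<and> class_Kinf \<gamma> \<and>
     (\<forall>t\<ge>0. \<forall>x. \<forall>u\<in>Uadm x \<inter> Uc.
        norm (\<phi> t x u) \<le> M * exp (- a * t) * norm x + \<gamma> (nU u)))"

definition expISS_lin_wrt ::
  "((real \<Rightarrow> 'v) \<Rightarrow> real) \<Rightarrow> ('x::real_normed_vector \<Rightarrow> (real \<Rightarrow> 'v) set)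
   \<Rightarrow> (real \<Rightarrow> 'x \<Rightarrow> (real \<Rightarrow> 'v) \<Rightarrow> 'x) \<Rightarrow> (real \<Rightarrow> 'v) set \<Rightarrow> bool" where
  "expISS_lin_wrt nU Uadm \<phi> Uc \<longleftrightarrow> (\<exists>M a \<gamma>. M > 0 \<and> a > 0 \<and> class_Kinf \<gamma> \<and> linear_fun \<gamma> \<and>
     (\<forall>t\<ge>0. \<forall>x. \<forall>u\<in>Uadm x \<inter> Uc.
        norm (\<phi> t x u) \<le> M * exp (- a * t) * norm x + \<gamma> (nU u)))"

end

theory Submission
  imports Defs
begin

lemma K_nonneg: "class_K g \<Longrightarrow> 0 \<le> r \<Longrightarrow> 0 \<le> g r" unfolding class_K_def by auto

lemma K_mono: "class_K g \<Longrightarrow> 0 \<le> r \<Longrightarrow> r \<le> s \<Longrightarrow> g r \<le> g s"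
  unfolding class_K_def strict_mono_on_def
  by (cases "r = s") (auto intro!: less_imp_le)

lemma K_comp: assumes f: "class_K f" and g: "class_K g" shows "class_K (\<lambda>r. f (g r))"
proof -
  have img: "g ` {0..} \<subseteq> {0..}" using g unfolding class_K_def by auto
  have c: "continuous_on {0..} (\<lambda>r. f (g r))"
    using continuous_on_compose2[of "{0..}" f "{0..}" g] f g img unfolding class_K_def by auto
  have "strict_mono_on {0..} (\<lambda>r. f (g r))"
    using f g unfolding class_K_def strict_mono_on_def by auto
  then show ?thesis using c f g unfolding class_K_def by auto
qed

lemma K_lin: "(c::real) > 0 \<Longrightarrow> class_K (\<lambda>r. c*r)"
  unfolding class_K_def strict_mono_on_def by (auto intro!: continuous_intros)

lemma K_add: assumes "class_K f" "class_K g" shows "class_K (\<lambda>r. f r + g r)"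
  using assms unfolding class_K_def strict_mono_on_def
  by (auto intro!: continuous_intros add_strict_mono)

lemma K_split: assumes g: "class_K g" and a: "0\<le>a" and b: "0\<le>b" shows "g (a+b) \<le> g (2*a) + g (2*b)"
proof (cases "a \<le> b")
  case True
  then have "g (a+b) \<le> g (2*b)" using K_mono[OF g] a by auto
  then show ?thesis using K_nonneg[OF g, of "2*a"] a by linarith
next
  case False
  then have "g (a+b) \<le> g (2*a)" using K_mono[OF g] b by auto
  then show ?thesis using K_nonneg[OF g, of "2*b"] b by linarith
qed

lemma L_comp: assumes f: "class_K f" and g: "class_L g" shows "class_L (\<lambda>t. f (g t))"
proof -
  have img: "g ` {0..} \<subseteq> {0..}" using g unfolding class_L_def by auto
  have c: "continuous_on {0..} (\<lambda>r. f (g r))"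
    using continuous_on_compose2[of "{0..}" f "{0..}" g] f g img unfolding class_K_def class_L_def by auto
  have m: "\<forall>s t. 0 \<le> s \<longrightarrow> s \<le> t \<longrightarrow> f (g t) \<le> f (g s)"
    using g K_mono[OF f] unfolding class_L_def by auto
  have nn: "\<forall>t\<ge>0. f (g t) \<ge> 0" using g K_nonneg[OF f] unfolding class_L_def by auto
  have ev: "eventually (\<lambda>t. g t \<in> {0..}) at_top"
    using g unfolding class_L_def
    by (auto intro!: eventually_mono[OF eventually_ge_at_top[of "0::real"]])
  have "((\<lambda>t. f (g t)) \<longlongrightarrow> f 0) at_top"
    using continuous_on_tendsto_compose[of "{0..}" f g 0 at_top] f g ev
    unfolding class_K_def class_L_def by auto
  then have "((\<lambda>t. f (g t)) \<longlongrightarrow> 0) at_top" using f unfolding class_K_def by simp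
  then show ?thesis using c m nn unfolding class_L_def by auto
qed

lemma lim_lemma: fixes f :: "real \<Rightarrow> real" assumes f: "continuous_on {0..} f" and v: "(v::real) \<ge> 0"
  and h: "\<forall>\<epsilon>>0. a \<le> f (v+\<epsilon>)" shows "a \<le> f v"
proof -
  have t: "((\<lambda>e. v + e) \<longlongrightarrow> v) (at_right 0)"
    by (auto intro!: tendsto_eq_intros)
  have ev: "eventually (\<lambda>e. v + e \<in> {0..}) (at_right (0::real))"
    using v by (auto intro!: eventually_mono[OF eventually_at_right_less[of "0::real"]])
  have lim: "((\<lambda>e. f (v + e)) \<longlongrightarrow> f v) (at_right 0)"
    using continuous_on_tendsto_compose[OF f t _ ev] v by auto
  have evb: "eventually (\<lambda>e. a \<le> f (v+e)) (at_right (0::real))"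
    using h by (auto intro!: eventually_mono[OF eventually_at_right_less[of "0::real"]])
  show ?thesis
    apply (rule tendsto_lowerbound[of "\<lambda>e. f (v+e)" "f v" "at_right (0::real)"])
    using lim evb by auto
qed

lemma Kinf_lin: assumes "class_Kinf g" "linear_fun g" shows "\<exists>c>0. \<forall>r\<ge>0. g r = c*r"
proof -
  obtain c where c: "\<forall>r\<ge>0. g r = c*r" using assms unfolding linear_fun_def by auto
  have H: "strict_mono_on {0..} g" using assms unfolding class_Kinf_def class_K_def by auto
  have "g 0 < g 1" using strict_mono_onD[OF H, of 0 1] by simp
  then have "c > 0" using c by (metis mult_zero_right mult.right_neutral order.refl zero_le_one)
  then show ?thesis using c by auto
qed

lemma Kinf_K: "class_Kinf g \<Longrightarrow> class_K g" unfolding class_Kinf_def by auto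

lemma KL_t: assumes b: "class_KL \<beta>" and r: "r \<ge> 0" and t: "t \<ge> 0" shows "\<beta> r t \<le> \<beta> r 0"
proof (cases "r = 0")
  case True
  then show ?thesis using b t unfolding class_KL_def class_K_def by auto
next
  case False
  then have "class_L (\<beta> r)" using b r unfolding class_KL_def by auto
  then show ?thesis using t unfolding class_L_def by auto
qed

lemma sandwich:
  assumes mono: "monotone_system KX KU Uadm \<phi>"
    and i: "\<forall>xm x xp. cle KX xm x \<longrightarrow> cle KX x xp \<longrightarrow> norm x \<le> \<rho> (norm xm + norm xp)"
    and ii: "\<forall>x. \<forall>u\<in>Uadm x. \<forall>\<epsilon>>0. \<exists>xm xp um up.
               um \<in> Uadm xm \<inter> Uc \<and> up \<in> Uadm xp \<inter> Uc \<and>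
               cle KX xm x \<and> cle KX x xp \<and> fle KU um u \<and> fle KU u up \<and>
               max (nU um) (nU up) \<le> \<eta> (nU u + \<epsilon>) \<and>
               max (norm xm) (norm xp) \<le> \<xi> (norm x + nU u + \<epsilon>)"
    and u: "u \<in> Uadm x" and t: "t \<ge> 0" and e: "\<epsilon> > 0"
  shows "\<exists>xm xp um up. um \<in> Uadm xm \<and> up \<in> Uadm xp \<and>
     nU um \<le> \<eta> (nU u + \<epsilon>) \<and> nU up \<le> \<eta> (nU u + \<epsilon>) \<and>
     norm xm \<le> \<xi> (norm x + nU u + \<epsilon>) \<and> norm xp \<le> \<xi> (norm x + nU u + \<epsilon>) \<and>
     um \<in> Uc \<and> up \<in> Uc \<and>
     norm (\<phi> t x u) \<le> \<rho> (norm (\<phi> t xm um) + norm (\<phi> t xp up))"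
proof -
  obtain xm xp um up where H: "um \<in> Uadm xm \<inter> Uc" "up \<in> Uadm xp \<inter> Uc"
     "cle KX xm x" "cle KX x xp" "fle KU um u" "fle KU u up"
     "max (nU um) (nU up) \<le> \<eta> (nU u + \<epsilon>)"
     "max (norm xm) (norm xp) \<le> \<xi> (norm x + nU u + \<epsilon>)"
    using ii u e by blast
  have l: "cle KX (\<phi> t xm um) (\<phi> t x u)" using mono H u t unfolding monotone_system_def by blast
  have r: "cle KX (\<phi> t x u) (\<phi> t xp up)" using mono H u t unfolding monotone_system_def by blast
  have "norm (\<phi> t x u) \<le> \<rho> (norm (\<phi> t xm um) + norm (\<phi> t xp up))" using i l r by blast
  then show ?thesis using H by (intro exI[of _ xm] exI[of _ xp] exI[of _ um] exI[of _ up]) auto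
qed

lemma iss_core:
  fixes \<phi> :: "real \<Rightarrow> 'x::real_normed_vector \<Rightarrow> (real \<Rightarrow> 'v) \<Rightarrow> 'x"
  assumes SW: "\<And>x u t \<epsilon>. u \<in> Uadm x \<Longrightarrow> t \<ge> 0 \<Longrightarrow> \<epsilon> > 0 \<Longrightarrow>
     \<exists>xm xp um up. um \<in> Uadm xm \<and> up \<in> Uadm xp \<and>
     nU um \<le> \<eta> (nU u + \<epsilon>) \<and> nU up \<le> \<eta> (nU u + \<epsilon>) \<and>
     norm xm \<le> \<xi> (norm x + nU u + \<epsilon>) \<and> norm xp \<le> \<xi> (norm x + nU u + \<epsilon>) \<and>
     um \<in> Uc \<and> up \<in> Uc \<and>
     norm (\<phi> t x u) \<le> \<rho> (norm (\<phi> t xm um) + norm (\<phi> t xp up))"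
  and nn: "\<And>x u. u \<in> Uadm x \<Longrightarrow> nU u \<ge> 0"
  and rho: "class_K \<rho>" and eta: "class_K \<eta>" and xi: "class_K \<xi>"
  and b: "class_KL \<beta>" and g: "class_K \<gamma>"
  and B: "\<forall>t\<ge>0. \<forall>x. \<forall>u\<in>Uadm x \<inter> Uc. norm (\<phi> t x u) \<le> \<beta> (norm x) t + \<gamma> (nU u)"
  shows "ISS_wrt nU Uadm \<phi> Uf"
proof -
  define \<beta>' where "\<beta>' = (\<lambda>r t. \<rho> (4 * \<beta> (2 * \<xi> (2 * r)) t))"
  define \<gamma>' where "\<gamma>' = (\<lambda>w. \<rho> (4 * \<beta> (2 * \<xi> (2 * w)) 0 + 4 * \<gamma> (\<eta> w)))"
  have K2: "class_K (\<lambda>r. 2 * r)" and K4: "class_K (\<lambda>r. 4 * r)" by (auto intro: K_lin)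
  have bK: "class_K (\<lambda>r. \<beta> r t)" if "t \<ge> 0" for t using b that unfolding class_KL_def by auto
  have KL': "class_KL \<beta>'"
    unfolding class_KL_def
  proof (intro conjI allI impI)
    fix t :: real assume t: "t \<ge> 0"
    show "class_K (\<lambda>r. \<beta>' r t)" unfolding \<beta>'_def
      using K_comp[OF K_comp[OF rho K4] K_comp[OF bK[OF t] K_comp[OF K_comp[OF K2 xi] K2]]] by simp
  next
    fix r :: real assume r: "r > 0"
    have sm: "strict_mono_on {0..} \<xi>" using xi unfolding class_K_def by auto
    have "\<xi> 0 < \<xi> (2*r)" using strict_mono_onD[OF sm, of 0 "2*r"] r by simp
    then have "2 * \<xi> (2 * r) > 0" using xi unfolding class_K_def by auto
    then have L: "class_L (\<beta> (2 * \<xi> (2 * r)))" using b unfolding class_KL_def by auto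
    show "class_L (\<beta>' r)" unfolding \<beta>'_def
      using L_comp[OF K_comp[OF rho K4] L] by simp
  qed
  have b0: "class_K (\<lambda>r. \<beta> r 0)" using bK by auto
  have K': "class_K \<gamma>'" unfolding \<gamma>'_def
    using K_comp[OF rho K_add[OF K_comp[OF K4 K_comp[OF b0 K_comp[OF K_comp[OF K2 xi] K2]]]
                             K_comp[OF K4 K_comp[OF g eta]]]] by simp
  have main: "norm (\<phi> t x u) \<le> \<beta>' (norm x) t + \<gamma>' (nU u + \<epsilon>)"
    if u: "u \<in> Uadm x" and t: "t \<ge> 0" and e: "\<epsilon> > 0" for x u t \<epsilon>
  proof -
    obtain xm xp um up where H: "um \<in> Uadm xm" "up \<in> Uadm xp"
      "nU um \<le> \<eta> (nU u + \<epsilon>)" "nU up \<le> \<eta> (nU u + \<epsilon>)"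
      "norm xm \<le> \<xi> (norm x + nU u + \<epsilon>)" "norm xp \<le> \<xi> (norm x + nU u + \<epsilon>)"
      "um \<in> Uc" "up \<in> Uc"
      "norm (\<phi> t x u) \<le> \<rho> (norm (\<phi> t xm um) + norm (\<phi> t xp up))"
      using SW[OF u t e] by blast
    define s where "s = norm x"
    define w where "w = nU u + \<epsilon>"
    have s0: "s \<ge> 0" unfolding s_def by simp
    have w0: "w \<ge> 0" unfolding w_def using nn[OF u] e by simp
    define Bd where "Bd = \<beta> (\<xi> (s + w)) t + \<gamma> (\<eta> w)"
    have bnd: "norm (\<phi> t y uu) \<le> Bd"
      if "uu \<in> Uadm y" "uu \<in> Uc" "nU uu \<le> \<eta> w" "norm y \<le> \<xi> (s + w)" for y uu
    proof -
      have "norm (\<phi> t y uu) \<le> \<beta> (norm y) t + \<gamma> (nU uu)" using B t that by blast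
      also have "\<beta> (norm y) t \<le> \<beta> (\<xi> (s + w)) t" using K_mono[OF bK[OF t]] that by simp
      also have "\<gamma> (nU uu) \<le> \<gamma> (\<eta> w)" using K_mono[OF g] that nn[OF that(1)] by simp
      finally show ?thesis unfolding Bd_def by simp
    qed
    have A1: "norm (\<phi> t xm um) \<le> Bd" using bnd H unfolding s_def w_def by (simp add: add.assoc)
    have A2: "norm (\<phi> t xp up) \<le> Bd" using bnd H unfolding s_def w_def by (simp add: add.assoc)
    have xin: "0 \<le> \<xi> (2 * s)" "0 \<le> \<xi> (2 * w)" using K_nonneg[OF xi] s0 w0 by auto
    have "\<xi> (s + w) \<le> \<xi> (2 * s) + \<xi> (2 * w)" using K_split[OF xi s0 w0] .
    then have "\<beta> (\<xi> (s + w)) t \<le> \<beta> (\<xi> (2 * s) + \<xi> (2 * w)) t"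
      using K_mono[OF bK[OF t]] K_nonneg[OF xi] s0 w0 by simp
    also have "\<dots> \<le> \<beta> (2 * \<xi> (2 * s)) t + \<beta> (2 * \<xi> (2 * w)) t" using K_split[OF bK[OF t] xin] .
    also have "\<beta> (2 * \<xi> (2 * w)) t \<le> \<beta> (2 * \<xi> (2 * w)) 0" using KL_t[OF b _ t] xin by simp
    finally have bb: "\<beta> (\<xi> (s + w)) t \<le> \<beta> (2 * \<xi> (2 * s)) t + \<beta> (2 * \<xi> (2 * w)) 0" by simp
    define X where "X = 2 * \<beta> (2 * \<xi> (2 * s)) t"
    define Y where "Y = 2 * \<beta> (2 * \<xi> (2 * w)) 0 + 2 * \<gamma> (\<eta> w)"
    have X0: "X \<ge> 0" unfolding X_def using K_nonneg[OF bK[OF t]] xin by simp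
    have Y0: "Y \<ge> 0" unfolding Y_def using K_nonneg[OF b0] K_nonneg[OF g] K_nonneg[OF eta] xin w0 by simp
    have "norm (\<phi> t x u) \<le> \<rho> (norm (\<phi> t xm um) + norm (\<phi> t xp up))" using H by simp
    also have "\<dots> \<le> \<rho> (X + Y)"
      using K_mono[OF rho, of "norm (\<phi> t xm um) + norm (\<phi> t xp up)" "X + Y"] A1 A2 bb
      unfolding X_def Y_def Bd_def by simp
    also have "\<dots> \<le> \<rho> (2*X) + \<rho> (2*Y)" using K_split[OF rho X0 Y0] .
    also have "\<dots> = \<beta>' s t + \<gamma>' w" unfolding X_def Y_def \<beta>'_def \<gamma>'_def by (simp add: algebra_simps)
    finally show ?thesis unfolding s_def w_def .
  qed
  have "norm (\<phi> t x u) \<le> \<beta>' (norm x) t + \<gamma>' (nU u)"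
    if u: "u \<in> Uadm x" and t: "t \<ge> 0" for x u t
  proof -
    have c: "continuous_on {0..} (\<lambda>w. \<beta>' (norm x) t + \<gamma>' w)"
      using K' unfolding class_K_def by (auto intro!: continuous_intros)
    show ?thesis using lim_lemma[OF c nn[OF u]] main[OF u t] by simp
  qed
  then show ?thesis unfolding ISS_wrt_def using KL' K' by blast
qed

lemma exp_core:
  fixes \<phi> :: "real \<Rightarrow> 'x::real_normed_vector \<Rightarrow> (real \<Rightarrow> 'v) \<Rightarrow> 'x"
  assumes SW: "\<And>x u t \<epsilon>. u \<in> Uadm x \<Longrightarrow> t \<ge> 0 \<Longrightarrow> \<epsilon> > 0 \<Longrightarrow>
     \<exists>xm xp um up. um \<in> Uadm xm \<and> up \<in> Uadm xp \<and>
     nU um \<le> \<eta> (nU u + \<epsilon>) \<and> nU up \<le> \<eta> (nU u + \<epsilon>) \<and>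
     norm xm \<le> \<xi> (norm x + nU u + \<epsilon>) \<and> norm xp \<le> \<xi> (norm x + nU u + \<epsilon>) \<and>
     um \<in> Uc \<and> up \<in> Uc \<and>
     norm (\<phi> t x u) \<le> \<rho> (norm (\<phi> t xm um) + norm (\<phi> t xp up))"
  and nn: "\<And>x u. u \<in> Uadm x \<Longrightarrow> nU u \<ge> 0"
  and rho: "\<forall>r\<ge>0. \<rho> r = cr * r" and cr: "cr > 0"
  and xi: "\<forall>r\<ge>0. \<xi> r = cx * r" and cx: "cx > 0"
  and eta: "class_K \<eta>"
  and M: "M > 0" and a: "a > 0" and g: "class_K \<gamma>"
  and B: "\<forall>t\<ge>0. \<forall>x. \<forall>u\<in>Uadm x \<inter> Uc. norm (\<phi> t x u) \<le> M * exp (- a * t) * norm x + \<gamma> (nU u)"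
  shows "\<forall>t\<ge>0. \<forall>x. \<forall>u\<in>Uadm x. norm (\<phi> t x u) \<le>
     (2*cr*M*cx) * exp (- a * t) * norm x + ((2*cr*M*cx) * nU u + 2 * cr * \<gamma> (\<eta> (nU u)))"
proof (intro allI impI ballI)
  fix t x u assume t: "(t::real) \<ge> 0" and u: "u \<in> Uadm x"
  define K where "K = 2*cr*M*cx"
  have K0: "K > 0" unfolding K_def using cr M cx by simp
  define E where "E = exp (- a * t)"
  have E0: "E > 0" and E1: "E \<le> 1" unfolding E_def using a t by (auto simp: mult_nonneg_nonneg)
  define s where "s = norm x"
  have s0: "s \<ge> 0" unfolding s_def by simp
  have main: "norm (\<phi> t x u) \<le> K * E * s + (K * w + 2 * cr * \<gamma> (\<eta> w))"
    if e: "\<epsilon> > 0" and w: "w = nU u + \<epsilon>" for \<epsilon> w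
  proof -
    obtain xm xp um up where H: "um \<in> Uadm xm" "up \<in> Uadm xp"
      "nU um \<le> \<eta> (nU u + \<epsilon>)" "nU up \<le> \<eta> (nU u + \<epsilon>)"
      "norm xm \<le> \<xi> (norm x + nU u + \<epsilon>)" "norm xp \<le> \<xi> (norm x + nU u + \<epsilon>)"
      "um \<in> Uc" "up \<in> Uc"
      "norm (\<phi> t x u) \<le> \<rho> (norm (\<phi> t xm um) + norm (\<phi> t xp up))"
      using SW[OF u t e] by blast
    have w0: "w \<ge> 0" using w nn[OF u] e by simp
    define Bd where "Bd = M * E * (cx * (s + w)) + \<gamma> (\<eta> w)"
    have bnd: "norm (\<phi> t y uu) \<le> Bd"
      if "uu \<in> Uadm y" "uu \<in> Uc" "nU uu \<le> \<eta> w" "norm y \<le> cx * (s + w)" for y uu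
    proof -
      have "norm (\<phi> t y uu) \<le> M * E * norm y + \<gamma> (nU uu)" using B t that unfolding E_def by blast
      also have "M * E * norm y \<le> M * E * (cx * (s + w))"
        using that M E0 by (intro mult_left_mono) auto
      also have "\<gamma> (nU uu) \<le> \<gamma> (\<eta> w)" using K_mono[OF g] that nn[OF that(1)] by simp
      finally show ?thesis unfolding Bd_def by simp
    qed
    have xe: "\<xi> (norm x + nU u + \<epsilon>) = cx * (s + w)"
      using xi s0 w0 unfolding s_def w by (simp add: add.assoc)
    have A1: "norm (\<phi> t xm um) \<le> Bd" using bnd H xe w by simp
    have A2: "norm (\<phi> t xp up) \<le> Bd" using bnd H xe w by simp
    have "norm (\<phi> t x u) \<le> cr * (norm (\<phi> t xm um) + norm (\<phi> t xp up))" using H rho by simp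
    also have "\<dots> \<le> cr * (2 * Bd)" using A1 A2 cr by simp
    also have "\<dots> = K * E * s + K * E * w + 2 * cr * \<gamma> (\<eta> w)"
      unfolding Bd_def K_def by (simp add: algebra_simps)
    also have "K * E * w \<le> K * w"
    proof -
      have "(K * w) * E \<le> K * w" using K0 E0 E1 w0 by (intro mult_right_le_one_le) auto
      then show ?thesis by (simp add: ac_simps)
    qed
    finally show ?thesis by simp
  qed
  have c: "continuous_on {0..} (\<lambda>w. K * E * s + (K * w + 2 * cr * \<gamma> (\<eta> w)))"
    using K_comp[OF g eta] unfolding class_K_def by (auto intro!: continuous_intros)
  have "norm (\<phi> t x u) \<le> K * E * s + (K * nU u + 2 * cr * \<gamma> (\<eta> (nU u)))"
    using lim_lemma[OF c nn[OF u]] main by simp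
  then show "norm (\<phi> t x u) \<le>
     (2*cr*M*cx) * exp (- a * t) * norm x + ((2*cr*M*cx) * nU u + 2 * cr * \<gamma> (\<eta> (nU u)))"
    unfolding K_def E_def s_def .
qed

lemma Kinf_plus: assumes K: "(K::real) > 0" and h: "class_K h" shows "class_Kinf (\<lambda>w. K * w + h w)"
proof -
  have k: "class_K (\<lambda>w. K * w + h w)" using K_add[OF K_lin[OF K] h] by simp
  have "\<exists>r\<ge>0. K * r + h r > Mb" for Mb
  proof -
    define r where "r = max 0 (Mb / K) + 1"
    have r0: "r \<ge> 0" unfolding r_def by simp
    have "Mb / K < r" unfolding r_def by simp
    then have "Mb < K * r" using K by (simp add: field_simps)
    then show ?thesis using r0 K_nonneg[OF h r0] by (intro exI[of _ r]) auto
  qed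
  then show ?thesis using k unfolding class_Kinf_def by auto
qed

theorem mainTheorem2:
  fixes Uv :: "'v::real_normed_vector set"
    and Uf :: "(real \<Rightarrow> 'v) set"
    and nU :: "(real \<Rightarrow> 'v) \<Rightarrow> real"
    and Uadm :: "'x::real_normed_vector \<Rightarrow> (real \<Rightarrow> 'v) set"
    and \<phi> :: "real \<Rightarrow> 'x \<Rightarrow> (real \<Rightarrow> 'v) \<Rightarrow> 'x"
    and KX :: "'x set" and KU :: "(real \<Rightarrow> 'v) set"
    and Uc :: "(real \<Rightarrow> 'v) set"
    and \<rho> \<eta> \<xi> :: "real \<Rightarrow> real"
  assumes sys: "control_system Uv Uf nU Uadm \<phi>"
    and coneX: "positive_cone KX"
    and coneU: "positive_fun_cone Uf KU"
    and mono: "monotone_system KX KU Uadm \<phi>"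
    and Uc: "Uc \<subseteq> Uf"
    and rho: "class_Kinf \<rho>"
    and i: "\<forall>xm x xp. cle KX xm x \<longrightarrow> cle KX x xp \<longrightarrow> norm x \<le> \<rho> (norm xm + norm xp)"
    and eta: "class_Kinf \<eta>" and xi: "class_Kinf \<xi>"
    and ii: "\<forall>x. \<forall>u\<in>Uadm x. \<forall>\<epsilon>>0. \<exists>xm xp um up.
               um \<in> Uadm xm \<inter> Uc \<and> up \<in> Uadm xp \<inter> Uc \<and>
               cle KX xm x \<and> cle KX x xp \<and> fle KU um u \<and> fle KU u up \<and>
               max (nU um) (nU up) \<le> \<eta> (nU u + \<epsilon>) \<and>
               max (norm xm) (norm xp) \<le> \<xi> (norm x + nU u + \<epsilon>)"
  shows "(ISS_wrt nU Uadm \<phi> Uf \<longleftrightarrow> ISS_wrt nU Uadm \<phi> Uc)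
    \<and> (linear_fun \<rho> \<and> linear_fun \<xi> \<longrightarrow>
         (expISS_wrt nU Uadm \<phi> Uf \<longleftrightarrow> expISS_wrt nU Uadm \<phi> Uc))
    \<and> (linear_fun \<rho> \<and> linear_fun \<xi> \<and> linear_fun \<eta> \<and> expISS_lin_wrt nU Uadm \<phi> Uc \<longrightarrow>
         expISS_lin_wrt nU Uadm \<phi> Uf)"
proof -
  have sub: "\<And>x. Uadm x \<subseteq> Uf" using sys unfolding control_system_def by auto
  have isp: "input_space Uv Uf nU" using sys unfolding control_system_def by simp
  have nnf: "\<forall>u\<in>Uf. nU u \<ge> 0" using isp unfolding input_space_def by simp
  have nn: "\<And>x u. u \<in> Uadm x \<Longrightarrow> nU u \<ge> 0" using sub nnf by blast
  note SW = sandwich[OF mono i ii]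
  have inter: "\<And>x. Uadm x \<inter> Uc \<subseteq> Uadm x \<inter> Uf" using Uc by auto
  have P1: "ISS_wrt nU Uadm \<phi> Uf \<longleftrightarrow> ISS_wrt nU Uadm \<phi> Uc"
  proof
    assume "ISS_wrt nU Uadm \<phi> Uf"
    then obtain \<beta> \<gamma> where A: "class_KL \<beta>" "class_K \<gamma>"
      "\<forall>t\<ge>0. \<forall>x. \<forall>u\<in>Uadm x \<inter> Uf. norm (\<phi> t x u) \<le> \<beta> (norm x) t + \<gamma> (nU u)"
      unfolding ISS_wrt_def by blast
    show "ISS_wrt nU Uadm \<phi> Uc" unfolding ISS_wrt_def
      apply (rule exI[of _ \<beta>], rule exI[of _ \<gamma>]) using A Uc by auto
  next
    assume "ISS_wrt nU Uadm \<phi> Uc"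
    then obtain \<beta> \<gamma> where b: "class_KL \<beta>" and g: "class_K \<gamma>" and
      B: "\<forall>t\<ge>0. \<forall>x. \<forall>u\<in>Uadm x \<inter> Uc. norm (\<phi> t x u) \<le> \<beta> (norm x) t + \<gamma> (nU u)"
      unfolding ISS_wrt_def by blast
    show "ISS_wrt nU Uadm \<phi> Uf"
      by (rule iss_core[OF SW nn Kinf_K[OF rho] Kinf_K[OF eta] Kinf_K[OF xi] b g B]) auto
  qed
  have core: "\<exists>K>0. \<forall>t\<ge>0. \<forall>x. \<forall>u\<in>Uadm x. norm (\<phi> t x u) \<le>
      K * exp (- a * t) * norm x + (K * nU u + 2 * cr * \<gamma> (\<eta> (nU u)))"
    if lr: "\<forall>r\<ge>0. \<rho> r = cr * r" and cr: "cr > 0" and lx: "\<forall>r\<ge>0. \<xi> r = cx * r" and cx: "cx > 0"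
      and M: "M > 0" and a: "a > 0" and g: "class_K \<gamma>"
      and B: "\<forall>t\<ge>0. \<forall>x. \<forall>u\<in>Uadm x \<inter> Uc. norm (\<phi> t x u) \<le> M * exp (- a * t) * norm x + \<gamma> (nU u)"
    for cr cx M a \<gamma>
  proof -
    have "\<forall>t\<ge>0. \<forall>x. \<forall>u\<in>Uadm x. norm (\<phi> t x u) \<le>
     (2*cr*M*cx) * exp (- a * t) * norm x + ((2*cr*M*cx) * nU u + 2 * cr * \<gamma> (\<eta> (nU u)))"
      by (rule exp_core[OF SW nn lr cr lx cx Kinf_K[OF eta] M a g B]) auto
    moreover have "2*cr*M*cx > 0" using cr M cx by simp
    ultimately show ?thesis by blast
  qed
  have P2: "expISS_wrt nU Uadm \<phi> Uf \<longleftrightarrow> expISS_wrt nU Uadm \<phi> Uc"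
    if lin: "linear_fun \<rho>" "linear_fun \<xi>"
  proof
    assume "expISS_wrt nU Uadm \<phi> Uf"
    then obtain M a \<gamma> where A: "M > 0" "a > 0" "class_Kinf \<gamma>"
      "\<forall>t\<ge>0. \<forall>x. \<forall>u\<in>Uadm x \<inter> Uf. norm (\<phi> t x u) \<le> M * exp (- a * t) * norm x + \<gamma> (nU u)"
      unfolding expISS_wrt_def by blast
    show "expISS_wrt nU Uadm \<phi> Uc" unfolding expISS_wrt_def
      apply (rule exI[of _ M], rule exI[of _ a], rule exI[of _ \<gamma>]) using A Uc by auto
  next
    assume "expISS_wrt nU Uadm \<phi> Uc"
    then obtain M a \<gamma> where M: "M > 0" and a: "a > 0" and g: "class_Kinf \<gamma>" and
      B: "\<forall>t\<ge>0. \<forall>x. \<forall>u\<in>Uadm x \<inter> Uc. norm (\<phi> t x u) \<le> M * exp (- a * t) * norm x + \<gamma> (nU u)"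
      unfolding expISS_wrt_def by blast
    obtain cr where cr: "cr > 0" "\<forall>r\<ge>0. \<rho> r = cr * r" using Kinf_lin[OF rho lin(1)] by blast
    obtain cx where cx: "cx > 0" "\<forall>r\<ge>0. \<xi> r = cx * r" using Kinf_lin[OF xi lin(2)] by blast
    obtain K where K: "K > 0" and KB: "\<forall>t\<ge>0. \<forall>x. \<forall>u\<in>Uadm x. norm (\<phi> t x u) \<le>
      K * exp (- a * t) * norm x + (K * nU u + 2 * cr * \<gamma> (\<eta> (nU u)))"
      using core[OF cr(2) cr(1) cx(2) cx(1) M a Kinf_K[OF g] B] by blast
    have h: "class_K (\<lambda>w. 2 * cr * \<gamma> (\<eta> w))"
      using K_comp[OF K_lin[of "2*cr"] K_comp[OF Kinf_K[OF g] Kinf_K[OF eta]]] cr by (simp add: mult.assoc)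
    have ki2: "class_Kinf (\<lambda>w. K * w + 2 * cr * \<gamma> (\<eta> w))" using Kinf_plus[OF K h] .
    show "expISS_wrt nU Uadm \<phi> Uf" unfolding expISS_wrt_def
      apply (rule exI[of _ K], rule exI[of _ a], rule exI[of _ "\<lambda>w. K * w + 2 * cr * \<gamma> (\<eta> w)"]) using K a KB ki2 by auto
  qed
  have P3: "expISS_lin_wrt nU Uadm \<phi> Uf"
    if lin: "linear_fun \<rho>" "linear_fun \<xi>" "linear_fun \<eta>" and E: "expISS_lin_wrt nU Uadm \<phi> Uc"
  proof -
    obtain M a \<gamma> where M: "M > 0" and a: "a > 0" and g: "class_Kinf \<gamma>" and gl: "linear_fun \<gamma>" and
      B: "\<forall>t\<ge>0. \<forall>x. \<forall>u\<in>Uadm x \<inter> Uc. norm (\<phi> t x u) \<le> M * exp (- a * t) * norm x + \<gamma> (nU u)"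
      using E unfolding expISS_lin_wrt_def by blast
    obtain cr where cr: "cr > 0" "\<forall>r\<ge>0. \<rho> r = cr * r" using Kinf_lin[OF rho lin(1)] by blast
    obtain cx where cx: "cx > 0" "\<forall>r\<ge>0. \<xi> r = cx * r" using Kinf_lin[OF xi lin(2)] by blast
    obtain ce where ce: "ce > 0" "\<forall>r\<ge>0. \<eta> r = ce * r" using Kinf_lin[OF eta lin(3)] by blast
    obtain cg where cg: "cg > 0" "\<forall>r\<ge>0. \<gamma> r = cg * r" using Kinf_lin[OF g gl] by blast
    obtain K where K: "K > 0" and KB: "\<forall>t\<ge>0. \<forall>x. \<forall>u\<in>Uadm x. norm (\<phi> t x u) \<le>
      K * exp (- a * t) * norm x + (K * nU u + 2 * cr * \<gamma> (\<eta> (nU u)))"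
      using core[OF cr(2) cr(1) cx(2) cx(1) M a Kinf_K[OF g] B] by blast
    have h: "class_K (\<lambda>w. 2 * cr * \<gamma> (\<eta> w))"
      using K_comp[OF K_lin[of "2*cr"] K_comp[OF Kinf_K[OF g] Kinf_K[OF eta]]] cr by (simp add: mult.assoc)
    have ki: "class_Kinf (\<lambda>w. K * w + 2 * cr * \<gamma> (\<eta> w))" using Kinf_plus[OF K h] .
    have "\<forall>r\<ge>0. K * r + 2 * cr * \<gamma> (\<eta> r) = (K + 2 * cr * cg * ce) * r"
    proof (intro allI impI)
      fix r :: real assume r: "r \<ge> 0"
      have "\<eta> r = ce * r" using ce r by simp
      moreover have "ce * r \<ge> 0" using ce r by simp
      ultimately have "\<gamma> (\<eta> r) = cg * (ce * r)" using cg by simp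
      then show "K * r + 2 * cr * \<gamma> (\<eta> r) = (K + 2 * cr * cg * ce) * r" by (simp add: algebra_simps)
    qed
    then have lf: "linear_fun (\<lambda>w. K * w + 2 * cr * \<gamma> (\<eta> w))" unfolding linear_fun_def by blast
    show ?thesis unfolding expISS_lin_wrt_def
      apply (rule exI[of _ K], rule exI[of _ a], rule exI[of _ "\<lambda>w. K * w + 2 * cr * \<gamma> (\<eta> w)"]) using K a KB ki lf by auto
  qed
  show ?thesis using P1 P2 P3 by blast
qed
end
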